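(* Let $G=GL_{d+1}(L)$ with the setting below and $\xi$ given by $(a_1,\dots,a_{d+1})$, $a_1\le\dots\le a_{d+1}$. Then $T'_\xi(K)$ consists of all $\zeta\in T'(K)$ such that the polygon $\mathcal{P}\big((\mathrm{val}_L(\zeta_1),\dots,\mathrm{val}_L(\zeta_{d+1}))^{dom}\big)$ lies on or above the polygon $\mathcal{P}(a_1,a_2+[L:\mathbb{Q}_p],\dots,a_{d+1}+d[L:\mathbb{Q}_p])$ and both polygons have the same endpoint.
   Context: $L$ is a finite extension of $\mathbb{Q}_p$ with ring of integers $o_L$, prime element $\pi_L$, residue field cardinality $q$, normalized absolute value $|\ |_L$; $K$ a complete extension field of $\mathbb{Q}_p$ containing $L$; $\mathrm{val}_L:K^\times\to\mathbb{R}$ with $\mathrm{val}_L(L^\times)=\mathbb{Z}$. $G=GL_{d+1}(L)$, $P$ lower triangular Borel, $T$ diagonal torus, $U_0=GL_{d+1}(o_L)$, $\Lambda=T/(T\cap U_0)$, $\lambda:T\to\Lambda$ the projection, $W=S_{d+1}$ acting by conjugation, $\Phi^+$ roots of $T$ in $\mathrm{Lie}(P)$, $T^{--}=\{t:|\alpha(t)|_L\ge1\ \forall\alpha\in\Phi^+\}$, $\Lambda^{--}=\lambda(T^{--})$. $\xi(\mathrm{diag}(g_i))=\prod g_i^{a_i}$. $\gamma_\xi(w,\lambda(t)):=\big(\prod_{\alpha\in\Phi^+\setminus{}^{w^{-1}}\Phi^+}|\alpha(t)|_L\big)\pi_L^{\mathrm{val}_L(\xi({}^wt))-\mathrm{val}_L(\xi(t))}$,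 $\gamma_\xi^{dom}(\lambda):=\gamma_\xi(w,\lambda)$ for $w$ with ${}^w\lambda\in\Lambda^{--}$. $T'(K)=\mathrm{Hom}(\Lambda,K^\times)$, $T'_\xi(K)=\{\zeta:|\zeta(\lambda)|\le|\gamma_\xi^{dom}(\lambda)|\ \forall\lambda\}$. Coordinates: $\zeta_i:=q^{i-1}\pi_L^{a_i}\zeta(\lambda_{\{i\}})$ where $\lambda_{\{i\}}$ is the class of the diagonal matrix with $\pi_L$ in place $i$ and $1$ elsewhere. For $r\in\mathbb{R}^{d+1}$, $r^{dom}$ is its rearrangement in increasing order, and for an increasing sequence $r_1\le\dots\le r_{d+1}$, $\mathcal{P}(r)$ is the convex polygon through $(0,0),(1,r_1),(2,r_1+r_2),\dots,(d+1,r_1+\dots+r_{d+1})$. *)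

theory Defs
  imports Complex_Main "HOL-Combinatorics.Permutations" "HOL-Computational_Algebra.Primes"
begin

text \<open>Abstract valuation-theoretic setting: K is a field of characteristic 0 with a
  (real-valued, additive) valuation val = val_L, normalised so that val(pi_L) = 1.
  p is the residue characteristic, e the ramification index, f the residue degree of L,
  so q = p^f and [L:Q_p] = e*f.\<close>
definition padic_setting :: "('k::field \<Rightarrow> real) \<Rightarrow> 'k \<Rightarrow> nat \<Rightarrow> nat \<Rightarrow> nat \<Rightarrow> bool" where
  "padic_setting val piL p e f \<longleftrightarrow>
     prime p \<and> e \<ge> 1 \<and> f \<ge> 1 \<and> CHAR('k) = 0 \<and>
     (\<forall>x y. x \<noteq> 0 \<longrightarrow> y \<noteq> 0 \<longrightarrow> val (x * y) = val x + val y) \<and>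
     (\<forall>x y. x \<noteq> 0 \<longrightarrow> y \<noteq> 0 \<longrightarrow> x + y \<noteq> 0 \<longrightarrow> min (val x) (val y) \<le> val (x + y)) \<and>
     piL \<noteq> 0 \<and> val piL = 1 \<and> val (of_nat p) = real e"

definition absK :: "nat \<Rightarrow> ('k::field \<Rightarrow> real) \<Rightarrow> 'k \<Rightarrow> real" where
  "absK q val x = (if x = 0 then 0 else real q powr (- val x))"

text \<open>Lambda = T/(T cap U_0) identified with Z^{d+1} (indices 1..d+1) via
  lambda(diag(t_i)) = (val_L t_i)_i.\<close>
definition Lambda :: "nat \<Rightarrow> (nat \<Rightarrow> int) set" where
  "Lambda d = {\<mu>. \<forall>i. i \<notin> {1..d+1} \<longrightarrow> \<mu> i = 0}"

text \<open>lambda_{i}: class of the diagonal matrix with pi_L in place i.\<close>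
definition lam_unit :: "nat \<Rightarrow> nat \<Rightarrow> int" where
  "lam_unit i = (\<lambda>j. if j = i then 1 else 0)"

definition Tprime :: "nat \<Rightarrow> ((nat \<Rightarrow> int) \<Rightarrow> 'k::field) set" where
  "Tprime d = {\<zeta>. (\<forall>\<mu>\<in>Lambda d. \<zeta> \<mu> \<noteq> 0) \<and>
                  (\<forall>\<mu>\<in>Lambda d. \<forall>\<nu>\<in>Lambda d. \<zeta> (\<lambda>i. \<mu> i + \<nu> i) = \<zeta> \<mu> * \<zeta> \<nu>)}"

text \<open>Conjugation action of w in S_{d+1}: (w t w^{-1})_{w(i)} = t_i.\<close>
definition wact :: "(nat \<Rightarrow> nat) \<Rightarrow> (nat \<Rightarrow> int) \<Rightarrow> (nat \<Rightarrow> int)" where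
  "wact w \<mu> = \<mu> \<circ> inv w"

text \<open>Lambda^{--}: |alpha(t)| >= 1 for the roots t_i/t_j (i > j) of the lower Borel,
  i.e. the valuations are non-increasing.\<close>
definition dominant :: "nat \<Rightarrow> (nat \<Rightarrow> int) \<Rightarrow> bool" where
  "dominant d \<mu> \<longleftrightarrow> (\<forall>i\<in>{1..d+1}. \<forall>j\<in>{1..d+1}. i \<le> j \<longrightarrow> \<mu> j \<le> \<mu> i)"

text \<open>gamma_xi(w, lambda): the positive roots alpha = e_i - e_j (i > j) with
  w.alpha not positive are those with w i < w j; |alpha(t)|_L = q^(mu_j - mu_i).\<close>
definition gamma :: "'k::field \<Rightarrow> nat \<Rightarrow> nat \<Rightarrow> (nat \<Rightarrow> int) \<Rightarrow> (nat \<Rightarrow> nat) \<Rightarrow> (nat \<Rightarrow> int) \<Rightarrow> 'k" where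
  "gamma piL q d a w \<mu> =
     of_nat q powi (\<Sum>(i, j)\<in>{(i, j). i \<in> {1..d+1} \<and> j \<in> {1..d+1} \<and> j < i \<and> w i < w j}. \<mu> j - \<mu> i)
     * piL powi ((\<Sum>i\<in>{1..d+1}. a i * wact w \<mu> i) - (\<Sum>i\<in>{1..d+1}. a i * \<mu> i))"

definition gamma_dom :: "'k::field \<Rightarrow> nat \<Rightarrow> nat \<Rightarrow> (nat \<Rightarrow> int) \<Rightarrow> (nat \<Rightarrow> int) \<Rightarrow> 'k" where
  "gamma_dom piL q d a \<mu> =
     gamma piL q d a (SOME w. w permutes {1..d+1} \<and> dominant d (wact w \<mu>)) \<mu>"

definition Txi :: "('k::field \<Rightarrow> real) \<Rightarrow> 'k \<Rightarrow> nat \<Rightarrow> nat \<Rightarrow> (nat \<Rightarrow> int) \<Rightarrow> ((nat \<Rightarrow> int) \<Rightarrow> 'k) set" where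
  "Txi val piL q d a = {\<zeta> \<in> Tprime d.
     \<forall>\<mu>\<in>Lambda d. absK q val (\<zeta> \<mu>) \<le> absK q val (gamma_dom piL q d a \<mu>)}"

definition zcoord :: "'k::field \<Rightarrow> nat \<Rightarrow> (nat \<Rightarrow> int) \<Rightarrow> ((nat \<Rightarrow> int) \<Rightarrow> 'k) \<Rightarrow> nat \<Rightarrow> 'k" where
  "zcoord piL q a \<zeta> i = of_nat q ^ (i - 1) * piL powi a i * \<zeta> (lam_unit i)"

text \<open>The polygon P(r) through (0,0),(1,r_1),(2,r_1+r_2),... as a piecewise linear
  function on [0, length r].\<close>
definition polygon :: "real list \<Rightarrow> real \<Rightarrow> real" where
  "polygon r x = sum_list (take (nat \<lfloor>x\<rfloor>) r)
     + (x - of_int \<lfloor>x\<rfloor>) * (if nat \<lfloor>x\<rfloor> < length r then r ! nat \<lfloor>x\<rfloor> else 0)"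

definition poly_above_same_end :: "real list \<Rightarrow> real list \<Rightarrow> bool" where
  "poly_above_same_end r s \<longleftrightarrow> length r = length s \<and>
     (\<forall>x\<in>{0..real (length r)}. polygon s x \<le> polygon r x) \<and>
     polygon r (real (length r)) = polygon s (real (length s))"

end

theory Submission
  imports Defs
begin


lemma polygon_nat: "polygon r (real k) = sum_list (take k r)"
  by (simp add: polygon_def)

lemma take_Suc_sum: "k < length r \<Longrightarrow> sum_list (take (Suc k) r) = sum_list (take k r) + r ! k"
  by (simp add: take_Suc_conv_app_nth)

lemma poly_above_iff:
  assumes "length r = n" "length s = n"
  shows "poly_above_same_end r s \<longleftrightarrow>
    (\<forall>k\<le>n. sum_list (take k s) \<le> sum_list (take k r)) \<and> sum_list r = sum_list s"
proof
  assume H: "poly_above_same_end r s"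
  have "\<forall>k\<le>n. sum_list (take k s) \<le> sum_list (take k r)"
  proof (intro allI impI)
    fix k assume "k \<le> n"
    then have "real k \<in> {0..real (length r)}" using assms by auto
    then show "sum_list (take k s) \<le> sum_list (take k r)"
      using H unfolding poly_above_same_end_def by (metis polygon_nat)
  qed
  moreover have "sum_list r = sum_list s"
    using H assms unfolding poly_above_same_end_def by (simp add: polygon_nat)
  ultimately show "(\<forall>k\<le>n. sum_list (take k s) \<le> sum_list (take k r)) \<and> sum_list r = sum_list s" by blast
next
  assume H: "(\<forall>k\<le>n. sum_list (take k s) \<le> sum_list (take k r)) \<and> sum_list r = sum_list s"
  have "polygon s x \<le> polygon r x" if x: "x \<in> {0..real n}" for x
  proof -
    define m where "m = nat \<lfloor>x\<rfloor>"
    define t where "t = x - of_int \<lfloor>x\<rfloor>"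
    have fl: "of_int \<lfloor>x\<rfloor> = real m" using x by (simp add: m_def)
    have t01: "0 \<le> t" "t < 1" unfolding t_def by linarith+
    have "m \<le> n" using x unfolding m_def by (simp add: nat_le_iff floor_le_iff)
    show ?thesis
    proof (cases "m < n")
      case True
      have pr0: "polygon r x = sum_list (take m r) + t * r ! m"
        using True assms unfolding polygon_def m_def[symmetric] t_def[symmetric] by simp
      have ps0: "polygon s x = sum_list (take m s) + t * s ! m"
        using True assms unfolding polygon_def m_def[symmetric] t_def[symmetric] by simp
      have pr: "polygon r x = (1 - t) * sum_list (take m r) + t * sum_list (take (Suc m) r)"
        using True assms unfolding pr0 by (simp add: take_Suc_sum algebra_simps)
      have ps: "polygon s x = (1 - t) * sum_list (take m s) + t * sum_list (take (Suc m) s)"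
        using True assms unfolding ps0 by (simp add: take_Suc_sum algebra_simps)
      have "sum_list (take m s) \<le> sum_list (take m r)" "sum_list (take (Suc m) s) \<le> sum_list (take (Suc m) r)"
        using H True by auto
      then show ?thesis unfolding pr ps using t01
        by (intro add_mono mult_left_mono) auto
    next
      case False
      then have "m = n" using \<open>m \<le> n\<close> by simp
      then have "x = real n" using x fl t01 unfolding t_def by auto
      then show ?thesis using H assms by (simp add: polygon_nat)
    qed
  qed
  then show "poly_above_same_end r s"
    using H assms unfolding poly_above_same_end_def by (simp add: polygon_nat)
qed



lemma map_upt_nth: "i < n \<Longrightarrow> map z [1..<n+1] ! i = z (Suc i)"
  by (simp del: upt_Suc)

lemma shift_perm:
  assumes "p permutes {..<n}"
  shows "(\<lambda>k. if k \<in> {1..n} then Suc (p (k - 1)) else k) permutes {1..n}"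
proof (rule bij_imp_permutes)
  have b1: "bij_betw (\<lambda>k. k - 1) {1..n} {..<n}"
    by (rule bij_betwI[where g=Suc]) auto
  have b2: "bij_betw p {..<n} {..<n}" using assms by (rule permutes_imp_bij)
  have b3: "bij_betw Suc {..<n} {1..n}"
    by (rule bij_betwI[where g="\<lambda>k. k - 1"]) auto
  have "bij_betw (Suc \<circ> p \<circ> (\<lambda>k. k - 1)) {1..n} {1..n}"
    using b1 b2 b3 by (meson bij_betw_trans)
  then show "bij_betw (\<lambda>k. if k \<in> {1..n} then Suc (p (k - 1)) else k) {1..n} {1..n}"
    by (rule bij_betw_cong[THEN iffD1, rotated]) auto
qed auto

lemma sort_perm:
  fixes z :: "nat \<Rightarrow> 'a::linorder"
  shows "\<exists>\<sigma>. bij_betw \<sigma> {..<n} {1..n} \<and> (\<forall>t<n. sort (map z [1..<n+1]) ! t = z (\<sigma> t))"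
proof -
  define xs where "xs = map z [1..<n+1]"
  have "mset (sort xs) = mset xs" by simp
  then obtain p where p: "p permutes {..<length xs}" "permute_list p xs = sort xs"
    by (rule mset_eq_permutation)
  have lx: "length xs = n" by (simp add: xs_def)
  have b2: "bij_betw p {..<n} {..<n}" using p lx by (simp add: permutes_imp_bij)
  have b3: "bij_betw Suc {..<n} {1..n}"
    by (rule bij_betwI[where g="\<lambda>k. k - 1"]) auto
  have "bij_betw (Suc \<circ> p) {..<n} {1..n}" using b2 b3 by (rule bij_betw_trans)
  moreover have "\<forall>t<n. sort xs ! t = z ((Suc \<circ> p) t)"
  proof (intro allI impI)
    fix t assume t: "t < n"
    have "sort xs ! t = xs ! p t" using p lx t by (metis permute_list_nth)
    moreover have "p t < n" using permutes_in_image[OF p(1), of t] lx t by simp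
    ultimately show "sort xs ! t = z ((Suc \<circ> p) t)" by (simp add: xs_def map_upt_nth del: upt_Suc)
  qed
  ultimately show ?thesis unfolding xs_def by blast
qed

lemma dom_exists:
  fixes \<mu> :: "nat \<Rightarrow> int"
  shows "\<exists>w. w permutes {1..d+1} \<and> dominant d (wact w \<mu>)"
proof -
  define n where "n = d + 1"
  define xs where "xs = map \<mu> [1..<n+1]"
  define ys where "ys = rev (sort xs)"
  have lx: "length xs = n" "length ys = n" by (simp_all add: xs_def ys_def)
  have "mset ys = mset xs" by (simp add: ys_def)
  then obtain p where p: "p permutes {..<length xs}" "permute_list p xs = ys"
    by (metis mset_eq_permutation)
  define w' where "w' = (\<lambda>k. if k \<in> {1..n} then Suc (p (k - 1)) else k)"
  have w'p: "w' permutes {1..n}" unfolding w'_def using p lx by (intro shift_perm) simp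
  define w where "w = inv w'"
  have wp: "w permutes {1..n}" unfolding w_def using w'p by (rule permutes_inv)
  have iw: "inv w = w'" unfolding w_def using w'p by (simp add: inv_inv_eq permutes_bij)
  have val: "wact w \<mu> k = sort xs ! (n - k)" if k: "k \<in> {1..n}" for k
  proof -
    have pk: "p (k - 1) < n" using permutes_in_image[OF p(1), of "k - 1"] lx k by auto
    have "wact w \<mu> k = \<mu> (Suc (p (k - 1)))" using k by (simp add: wact_def iw w'_def)
    also have "\<dots> = xs ! p (k - 1)" using pk by (simp add: xs_def map_upt_nth del: upt_Suc)
    also have "\<dots> = ys ! (k - 1)"
    proof -
      have "k - 1 < length xs" using k lx by auto
      then show ?thesis using permute_list_nth[OF p(1)] p(2) by metis
    qed
    also have "\<dots> = sort xs ! (n - k)" using k lx unfolding ys_def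
      by (subst rev_nth) auto
    finally show ?thesis .
  qed
  have "dominant d (wact w \<mu>)"
    unfolding dominant_def
  proof (intro ballI impI)
    fix i j assume ij: "i \<in> {1..d+1}" "j \<in> {1..d+1}" "i \<le> j"
    have "sort xs ! (n - j) \<le> sort xs ! (n - i)"
      using ij lx by (intro sorted_nth_mono) (auto simp: n_def)
    then show "wact w \<mu> j \<le> wact w \<mu> i" using ij by (simp add: val n_def)
  qed
  then show ?thesis using wp unfolding n_def by blast
qed



lemma count_sum:
  fixes g :: "nat \<Rightarrow> int"
  shows "(\<Sum>i\<in>{1..n}. \<Sum>j\<in>{1..n}. if j < i then g i else 0) = (\<Sum>i\<in>{1..n}. int (i - 1) * g i)"
proof (rule sum.cong[OF refl])
  fix i assume i: "i \<in> {1..n}"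
  have "(\<Sum>j\<in>{1..n}. if j < i then g i else 0) = (\<Sum>j\<in>{j\<in>{1..n}. j < i}. g i)"
    using sum.inter_filter[of "{1..n}" "\<lambda>j. g i" "\<lambda>j. j < i"] by simp
  also have "{j\<in>{1..n}. j < i} = {1..<i}" using i by auto
  finally show "(\<Sum>j\<in>{1..n}. if j < i then g i else 0) = int (i - 1) * g i" by simp
qed

lemma inv_identity:
  fixes \<mu> :: "nat \<Rightarrow> int"
  assumes w: "w permutes {1..n}"
  shows "(\<Sum>(i, j)\<in>{(i, j). i \<in> {1..n} \<and> j \<in> {1..n} \<and> j < i \<and> w i < w j}. \<mu> j - \<mu> i)
    = (\<Sum>k\<in>{1..n}. int (k - 1) * wact w \<mu> k) - (\<Sum>i\<in>{1..n}. int (i - 1) * \<mu> i)"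
proof -
  define N where "N = {1..n}"
  have inj: "i = j" if "i \<in> N" "j \<in> N" "w i = w j" for i j
    using that w by (metis permutes_inj injD)
  have nu: "wact w \<mu> (w i) = \<mu> i" for i
    using w by (simp add: wact_def permutes_inverses(2))
  have setq: "{(i, j). i \<in> N \<and> j \<in> N \<and> j < i \<and> w i < w j} = {x \<in> N \<times> N. snd x < fst x \<and> w (fst x) < w (snd x)}"
    by auto
  have L: "(\<Sum>(i, j)\<in>{(i, j). i \<in> N \<and> j \<in> N \<and> j < i \<and> w i < w j}. \<mu> j - \<mu> i)
     = (\<Sum>i\<in>N. \<Sum>j\<in>N. if j < i \<and> w i < w j then \<mu> j - \<mu> i else 0)"
    unfolding setq sum.cartesian_product
    by (simp add: sum.inter_filter[symmetric] N_def case_prod_beta split_def)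
  also have "\<dots> = (\<Sum>i\<in>N. \<Sum>j\<in>N. if j < i \<and> w i < w j then \<mu> j else 0)
                 - (\<Sum>i\<in>N. \<Sum>j\<in>N. if j < i \<and> w i < w j then \<mu> i else 0)"
    unfolding sum_subtractf[symmetric] by (intro sum.cong refl) auto
  also have "(\<Sum>i\<in>N. \<Sum>j\<in>N. if j < i \<and> w i < w j then \<mu> j else 0)
           = (\<Sum>i\<in>N. \<Sum>j\<in>N. if i < j \<and> w j < w i then \<mu> i else 0)"
    by (rule sum.swap)
  also have "(\<Sum>i\<in>N. \<Sum>j\<in>N. if i < j \<and> w j < w i then \<mu> i else 0)
             - (\<Sum>i\<in>N. \<Sum>j\<in>N. if j < i \<and> w i < w j then \<mu> i else 0)
           = (\<Sum>i\<in>N. \<Sum>j\<in>N. if w j < w i then \<mu> i else 0)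
             - (\<Sum>i\<in>N. \<Sum>j\<in>N. if j < i then \<mu> i else 0)"
  proof -
    have "(if i < j \<and> w j < w i then \<mu> i else 0) - (if j < i \<and> w i < w j then \<mu> i else 0)
        = (if w j < w i then \<mu> i else 0) - (if j < i then \<mu> i else 0)" if "i \<in> N" "j \<in> N" for i j
      using inj[OF that(1,2)] inj[OF that(2,1)] by (cases i j rule: linorder_cases) auto
    then show ?thesis by (simp add: sum_subtractf[symmetric])
  qed
  also have "(\<Sum>i\<in>N. \<Sum>j\<in>N. if w j < w i then \<mu> i else 0)
      = (\<Sum>k\<in>N. \<Sum>l\<in>N. if l < k then wact w \<mu> k else 0)"
  proof -
    have "(\<Sum>k\<in>N. \<Sum>l\<in>N. if l < k then wact w \<mu> k else 0)
        = (\<Sum>k\<in>N. \<Sum>j\<in>N. if w j < k then wact w \<mu> k else 0)"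
      using w unfolding N_def by (subst sum.permute[where p=w]) (auto simp: comp_def)
    also have "\<dots> = (\<Sum>i\<in>N. \<Sum>j\<in>N. if w j < w i then wact w \<mu> (w i) else 0)"
      using w unfolding N_def by (subst sum.permute[where p=w]) (auto simp: comp_def)
    finally show ?thesis unfolding nu by (rule sym)
  qed
  finally show ?thesis unfolding N_def count_sum by simp
qed



lemma sorted_sum_le:
  fixes s :: "real list"
  assumes "sorted s" "T \<subseteq> {..<length s}" "card T = k"
  shows "(\<Sum>t<k. s ! t) \<le> (\<Sum>t\<in>T. s ! t)"
proof -
  define A where "A = {..<k::nat}"
  have fT: "finite T" using assms(2) finite_subset by blast
  have sA: "sum ((!) s) A = sum ((!) s) (A \<inter> T) + sum ((!) s) (A - T)"
    unfolding A_def by (metis finite_lessThan sum.Int_Diff)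
  have sT: "sum ((!) s) T = sum ((!) s) (A \<inter> T) + sum ((!) s) (T - A)"
    using fT by (metis Int_commute sum.Int_Diff)
  have cA: "card (A - T) = card (T - A)"
  proof -
    have "card (A - T) = card A - card (A \<inter> T)" unfolding A_def by (simp add: card_Diff_subset_Int Diff_Int_distrib2 Int_commute card_Diff_subset)
    moreover have "card (T - A) = card T - card (A \<inter> T)" using fT by (metis Int_commute card_Diff_subset_Int finite_Int)
    ultimately show ?thesis using assms(3) unfolding A_def by simp
  qed
  show ?thesis
  proof (cases "T - A = {}")
    case True
    then have "card (A - T) = 0" using cA by (metis card.empty)
    then have "A - T = {}" unfolding A_def by simp
    then show ?thesis using sA sT True unfolding A_def by simp
  next
    case False
    then obtain t0 where t0: "t0 \<in> T" "t0 \<notin> A" by blast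
    then have kl: "k < length s" using assms(2) unfolding A_def by auto
    have "sum ((!) s) (A - T) \<le> of_nat (card (A - T)) * s ! k"
      by (rule sum_bounded_above) (use assms(1) kl in \<open>auto simp: A_def intro: sorted_nth_mono\<close>)
    moreover have "of_nat (card (T - A)) * s ! k \<le> sum ((!) s) (T - A)"
      by (rule sum_bounded_below) (use assms(1,2) in \<open>auto simp: A_def intro: sorted_nth_mono\<close>)
    ultimately show ?thesis using sA sT cA unfolding A_def by simp
  qed
qed

lemma abel:
  fixes \<nu> :: "nat \<Rightarrow> int" and c :: "nat \<Rightarrow> real"
  shows "(\<Sum>k\<in>{1..m}. of_int (\<nu> k) * c k)
    = (\<Sum>k\<in>{1..<m}. of_int (\<nu> k - \<nu> (Suc k)) * (\<Sum>t\<in>{1..k}. c t)) + of_int (\<nu> m) * (\<Sum>t\<in>{1..m}. c t)"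
proof (induction m)
  case 0
  then show ?case by simp
next
  case (Suc m)
  show ?case
  proof (cases "m = 0")
    case True
    then show ?thesis by simp
  next
    case False
    have e1: "{1..<Suc m} = insert m {1..<m}" using False by auto
    have e2: "{1..Suc m} = insert (Suc m) {1..m}" by auto
    show ?thesis unfolding e1 e2 using Suc by (simp add: algebra_simps)
  qed
qed

lemma downclosed:
  assumes "Q \<subseteq> {1..n}" "\<forall>x\<in>Q. \<forall>y\<in>{1..n}. y \<le> x \<longrightarrow> y \<in> Q" "card Q = k"
  shows "Q = {1..k::nat}"
proof -
  have fQ: "finite Q" using assms(1) finite_subset by blast
  have "Q \<subseteq> {1..k}"
  proof
    fix x assume x: "x \<in> Q"
    then have "{1..x} \<subseteq> Q" using assms(1,2) by auto
    then have "card {1..x} \<le> card Q" using fQ by (rule card_mono[rotated])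
    then show "x \<in> {1..k}" using x assms(1,3) by auto
  qed
  then show ?thesis using assms(3) by (metis card_atLeastAtMost card_subset_eq finite_atLeastAtMost diff_Suc_1)
qed



lemma sum_list_take_map_upt:
  assumes "k \<le> n"
  shows "sum_list (take k (map b [1..<n+1])) = (\<Sum>i\<in>{1..k}. b i)"
proof -
  have "take k (map b [1..<n+1]) = map b [1..<k+1]" using assms by (simp add: take_map take_upt del: upt_Suc)
  then show ?thesis by (simp add: sum_list_distinct_conv_sum_set atLeastLessThanSuc_atLeastAtMost del: upt_Suc)
qed

lemma sum_list_take_nth:
  assumes "k \<le> length s"
  shows "sum_list (take k s) = (\<Sum>t<k. s ! t)"
  using assms by (simp add: sum_list_sum_nth atLeast0LessThan min_def)

lemma comb:
  fixes z b :: "nat \<Rightarrow> real" and W :: "(nat \<Rightarrow> int) \<Rightarrow> (nat \<Rightarrow> nat)"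
  assumes W: "\<And>\<mu>. W \<mu> permutes {1..d+1} \<and> dominant d (wact (W \<mu>) \<mu>)"
  shows "(\<forall>\<mu>\<in>Lambda d. (\<Sum>k\<in>{1..d+1}. b k * of_int (wact (W \<mu>) \<mu> k)) \<le> (\<Sum>i\<in>{1..d+1}. of_int (\<mu> i) * z i))
     \<longleftrightarrow> poly_above_same_end (sort (map z [1..<d+2])) (map b [1..<d+2])"
proof -
  define n where "n = d + 1"
  define N where "N = {1..n}"
  have lst: "[1..<d+2] = [1..<n+1]" by (simp add: n_def)
  define s where "s = sort (map z [1..<n+1])"
  define bl where "bl = map b [1..<n+1]"
  obtain \<sigma> where \<sigma>: "bij_betw \<sigma> {..<n} N" "\<forall>t<n. s ! t = z (\<sigma> t)"
    using sort_perm[of n z] unfolding s_def N_def by blast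
  have ls: "length s = n" "length bl = n" by (simp_all add: s_def bl_def del: upt_Suc)
  have srt: "sorted s" by (simp add: s_def)
  have PS: "sum_list (take k s) = (\<Sum>t<k. z (\<sigma> t))" if "k \<le> n" for k
    using that ls \<sigma>(2) by (simp add: sum_list_take_nth)
  have PB: "sum_list (take k bl) = (\<Sum>i\<in>{1..k}. b i)" if "k \<le> n" for k
    using that unfolding bl_def by (rule sum_list_take_map_upt)
  have injs: "inj_on \<sigma> {..<n}" using \<sigma>(1) by (rule bij_betw_imp_inj_on)
  have sumN: "(\<Sum>i\<in>N. z i) = (\<Sum>t<n. z (\<sigma> t))"
    using \<sigma>(1) by (metis sum.reindex_bij_betw)
  have KS: "(\<Sum>t<k. z (\<sigma> t)) \<le> (\<Sum>i\<in>S. z i)" if S: "S \<subseteq> N" "card S = k" for S k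
  proof -
    define T where "T = {t\<in>{..<n}. \<sigma> t \<in> S}"
    have im: "\<sigma> ` T = S"
    proof
      show "\<sigma> ` T \<subseteq> S" unfolding T_def by auto
      show "S \<subseteq> \<sigma> ` T"
      proof
        fix x assume "x \<in> S"
        then have "x \<in> \<sigma> ` {..<n}" using S \<sigma>(1) by (auto simp: bij_betw_def)
        then show "x \<in> \<sigma> ` T" using \<open>x \<in> S\<close> unfolding T_def by auto
      qed
    qed
    have injT: "inj_on \<sigma> T" using injs unfolding T_def by (rule inj_on_subset) auto
    have cT: "card T = k" using S im injT by (metis card_image)
    have kn: "k \<le> n" using S unfolding N_def by (metis card_atLeastAtMost card_mono finite_atLeastAtMost diff_Suc_1 n_def)
    have "(\<Sum>i\<in>S. z i) = (\<Sum>t\<in>T. z (\<sigma> t))" using im injT by (metis sum.reindex_cong)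
    also have "\<dots> = (\<Sum>t\<in>T. s ! t)" using \<sigma>(2) unfolding T_def by (intro sum.cong) auto
    finally have e: "(\<Sum>i\<in>S. z i) = (\<Sum>t\<in>T. s ! t)" .
    have "(\<Sum>t<k. s ! t) \<le> (\<Sum>t\<in>T. s ! t)"
      using srt cT ls unfolding T_def by (intro sorted_sum_le) auto
    moreover have "(\<Sum>t<k. s ! t) = (\<Sum>t<k. z (\<sigma> t))" using \<sigma>(2) kn by (intro sum.cong) auto
    ultimately show ?thesis using e by simp
  qed
  have "(\<forall>\<mu>\<in>Lambda d. (\<Sum>k\<in>N. b k * of_int (wact (W \<mu>) \<mu> k)) \<le> (\<Sum>i\<in>N. of_int (\<mu> i) * z i))
     \<longleftrightarrow> poly_above_same_end s bl"
  proof
    assume H: "\<forall>\<mu>\<in>Lambda d. (\<Sum>k\<in>N. b k * of_int (wact (W \<mu>) \<mu> k)) \<le> (\<Sum>i\<in>N. of_int (\<mu> i) * z i)"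
    have part: "sum_list (take k bl) \<le> sum_list (take k s)" if k: "k \<le> n" for k
    proof -
      define A where "A = \<sigma> ` {..<k}"
      have AN: "A \<subseteq> N" unfolding A_def using \<sigma>(1) k by (auto simp: bij_betw_def)
      have cA: "card A = k" unfolding A_def using injs k by (metis card_image card_lessThan inj_on_subset lessThan_subset_iff)
      define \<mu> where "\<mu> = (\<lambda>i. if i \<in> A then (1::int) else 0)"
      have \<mu>L: "\<mu> \<in> Lambda d" using AN unfolding Lambda_def \<mu>_def N_def n_def by auto
      define w where "w = W \<mu>"
      have wp: "w permutes N" and dom: "dominant d (wact w \<mu>)" using W[of \<mu>] unfolding w_def N_def n_def by auto
      define Q where "Q = {x\<in>N. wact w \<mu> x = 1}"
      have Qeq: "Q = w ` A"
      proof
        show "Q \<subseteq> w ` A"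
        proof
          fix x assume "x \<in> Q"
          then have "inv w x \<in> A" unfolding Q_def wact_def \<mu>_def by (auto split: if_splits)
          moreover have "x = w (inv w x)" using wp by (simp add: permutes_inverses(1))
          ultimately show "x \<in> w ` A" by blast
        qed
        show "w ` A \<subseteq> Q"
        proof
          fix x assume "x \<in> w ` A"
          then obtain y where y: "y \<in> A" "x = w y" by blast
          have "x \<in> N" using y AN wp by (simp add: permutes_in_image subsetD)
          moreover have "inv w x = y" using y wp by (simp add: permutes_inverses(2))
          ultimately show "x \<in> Q" unfolding Q_def wact_def \<mu>_def using y by simp
        qed
      qed
      have cQ: "card Q = k" unfolding Qeq using cA wp by (metis card_image permutes_inj inj_on_subset subset_UNIV)
      have nu01: "wact w \<mu> x = 0 \<or> wact w \<mu> x = 1" for x unfolding wact_def \<mu>_def by auto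
      have Q1: "Q = {1..k}"
      proof (rule downclosed[of Q n])
        show "Q \<subseteq> {1..n}" unfolding Q_def N_def by auto
        show "card Q = k" by (rule cQ)
        show "\<forall>x\<in>Q. \<forall>y\<in>{1..n}. y \<le> x \<longrightarrow> y \<in> Q"
        proof (intro ballI impI)
          fix x y assume xy: "x \<in> Q" "y \<in> {1..n}" "y \<le> x"
          have xy': "x \<in> {1..d+1}" "y \<in> {1..d+1}" using xy unfolding Q_def N_def n_def by auto
          have "wact w \<mu> x \<le> wact w \<mu> y" using dom[unfolded dominant_def, rule_format, OF xy'(2) xy'(1) xy(3)] .
          then show "y \<in> Q" using xy nu01[of y] unfolding Q_def N_def by auto
        qed
      qed
      have "(\<Sum>x\<in>N. b x * of_int (wact w \<mu> x)) = (\<Sum>x\<in>N. if x \<in> Q then b x else 0)"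
      proof (rule sum.cong[OF refl])
        fix x assume "x \<in> N"
        then show "b x * of_int (wact w \<mu> x) = (if x \<in> Q then b x else 0)"
          using nu01[of x] unfolding Q_def by auto
      qed
      also have "\<dots> = (\<Sum>x\<in>Q. b x)"
      proof -
        have "Q \<subseteq> N" "finite N" unfolding Q_def N_def by auto
        then show ?thesis by (simp add: sum.inter_restrict[symmetric] Int_absorb1)
      qed
      finally have lhs: "(\<Sum>x\<in>N. b x * of_int (wact w \<mu> x)) = (\<Sum>i\<in>{1..k}. b i)" unfolding Q1 .
      have "(\<Sum>i\<in>N. of_int (\<mu> i) * z i) = (\<Sum>i\<in>N. if i \<in> A then z i else 0)"
        unfolding \<mu>_def by (intro sum.cong refl) auto
      also have "\<dots> = (\<Sum>i\<in>A. z i)" using AN unfolding N_def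
        by (simp add: sum.inter_restrict[symmetric] Int_absorb1)
      also have "\<dots> = (\<Sum>t<k. z (\<sigma> t))" unfolding A_def
        using injs k by (subst sum.reindex) (auto intro: inj_on_subset)
      finally have rhs: "(\<Sum>i\<in>N. of_int (\<mu> i) * z i) = (\<Sum>t<k. z (\<sigma> t))" .
      have "(\<Sum>x\<in>N. b x * of_int (wact w \<mu> x)) \<le> (\<Sum>i\<in>N. of_int (\<mu> i) * z i)"
        using H \<mu>L unfolding w_def by blast
      then show ?thesis using lhs rhs PS[OF k] PB[OF k] by simp
    qed
    have tot: "sum_list s = sum_list bl"
    proof -
      define \<mu> where "\<mu> = (\<lambda>i. if i \<in> N then (-1::int) else 0)"
      have \<mu>L: "\<mu> \<in> Lambda d" unfolding Lambda_def \<mu>_def N_def n_def by auto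
      define w where "w = W \<mu>"
      have wp: "w permutes N" using W[of \<mu>] unfolding w_def N_def n_def by auto
      have nu: "wact w \<mu> x = -1" if "x \<in> N" for x
        using that wp unfolding wact_def \<mu>_def by (simp add: permutes_in_image permutes_inv)
      have "(\<Sum>x\<in>N. b x * of_int (wact w \<mu> x)) \<le> (\<Sum>i\<in>N. of_int (\<mu> i) * z i)"
        using H \<mu>L unfolding w_def by blast
      also have "(\<Sum>i\<in>N. of_int (\<mu> i) * z i) = - (\<Sum>i\<in>N. z i)" unfolding \<mu>_def by (simp add: sum_negf)
      also have "(\<Sum>x\<in>N. b x * of_int (wact w \<mu> x)) = - (\<Sum>i\<in>N. b i)" by (simp add: nu sum_negf)
      finally have "(\<Sum>i\<in>N. z i) \<le> (\<Sum>i\<in>N. b i)" by simp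
      moreover have "sum_list bl \<le> sum_list s" using part[of n] ls by simp
      moreover have "sum_list s = (\<Sum>i\<in>N. z i)" using PS[of n] ls sumN by simp
      moreover have "sum_list bl = (\<Sum>i\<in>N. b i)" using PB[of n] ls unfolding N_def by simp
      ultimately show ?thesis by simp
    qed
    show "poly_above_same_end s bl"
      using part tot ls by (subst poly_above_iff[of _ n]) auto
  next
    assume P: "poly_above_same_end s bl"
    then have part: "\<forall>k\<le>n. sum_list (take k bl) \<le> sum_list (take k s)" and tot: "sum_list s = sum_list bl"
      using poly_above_iff[of s n bl] ls by auto
    show "\<forall>\<mu>\<in>Lambda d. (\<Sum>k\<in>N. b k * of_int (wact (W \<mu>) \<mu> k)) \<le> (\<Sum>i\<in>N. of_int (\<mu> i) * z i)"
    proof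
      fix \<mu> :: "nat \<Rightarrow> int" assume "\<mu> \<in> Lambda d"
      define w where "w = W \<mu>"
      have wp: "w permutes N" and dom: "dominant d (wact w \<mu>)" using W[of \<mu>] unfolding w_def N_def n_def by auto
      have iwp: "inv w permutes N" using wp by (rule permutes_inv)
      define \<nu> where "\<nu> = wact w \<mu>"
      define c where "c = (\<lambda>k. z (inv w k) - b k)"
      define C where "C = (\<lambda>k. \<Sum>t\<in>{1..k}. c t)"
      have "(\<Sum>i\<in>N. of_int (\<mu> i) * z i) = (\<Sum>k\<in>N. of_int (\<mu> (inv w k)) * z (inv w k))"
        using iwp by (subst sum.permute[where p="inv w"]) (auto simp: comp_def)
      also have "\<dots> = (\<Sum>k\<in>N. of_int (\<nu> k) * z (inv w k))" unfolding \<nu>_def wact_def by simp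
      finally have "(\<Sum>i\<in>N. of_int (\<mu> i) * z i) - (\<Sum>k\<in>N. b k * of_int (\<nu> k)) = (\<Sum>k\<in>N. of_int (\<nu> k) * c k)"
        unfolding c_def by (simp add: sum_subtractf[symmetric] algebra_simps)
      also have "\<dots> = (\<Sum>k\<in>{1..<n}. of_int (\<nu> k - \<nu> (Suc k)) * C k) + of_int (\<nu> n) * C n"
        unfolding N_def C_def by (rule abel)
      also have "C n = 0"
      proof -
        have "(\<Sum>t\<in>N. z (inv w t)) = (\<Sum>i\<in>N. z i)"
          using iwp by (subst (2) sum.permute[where p="inv w"]) (auto simp: comp_def)
        then have "C n = (\<Sum>i\<in>N. z i) - (\<Sum>i\<in>N. b i)" unfolding C_def c_def N_def by (simp add: sum_subtractf)
        also have "\<dots> = 0" using tot PS[of n] PB[of n] ls sumN unfolding N_def by simp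
        finally show ?thesis .
      qed
      also have "(\<Sum>k\<in>{1..<n}. of_int (\<nu> k - \<nu> (Suc k)) * C k) \<ge> 0"
      proof (rule sum_nonneg)
        fix k assume k: "k \<in> {1..<n}"
        have kk: "k \<in> {1..d+1}" "Suc k \<in> {1..d+1}" using k unfolding n_def by auto
        have "\<nu> (Suc k) \<le> \<nu> k" using dom[unfolded dominant_def, rule_format, OF kk(1) kk(2)] unfolding \<nu>_def by simp
        moreover have "C k \<ge> 0"
        proof -
          have kn: "k \<le> n" using k by simp
          have S: "inv w ` {1..k} \<subseteq> N"
          proof
            fix x assume "x \<in> inv w ` {1..k}"
            then obtain y where "y \<in> {1..k}" "x = inv w y" by blast
            then show "x \<in> N" using permutes_in_image[OF iwp, of y] kn unfolding N_def by auto
          qed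
          have injw: "inj_on (inv w) {1..k}" using iwp by (metis permutes_inj inj_on_subset subset_UNIV)
          have cS: "card (inv w ` {1..k}) = k" using injw by (simp add: card_image)
          have "(\<Sum>i\<in>{1..k}. b i) \<le> (\<Sum>t<k. z (\<sigma> t))" using part[rule_format, OF kn] PS[OF kn] PB[OF kn] by simp
          also have "\<dots> \<le> (\<Sum>i\<in>inv w ` {1..k}. z i)" using KS[OF S cS] .
          also have "\<dots> = (\<Sum>t\<in>{1..k}. z (inv w t))" using injw by (simp add: sum.reindex)
          finally show ?thesis unfolding C_def c_def by (simp add: sum_subtractf)
        qed
        ultimately show "0 \<le> of_int (\<nu> k - \<nu> (Suc k)) * C k" by simp
      qed
      ultimately show "(\<Sum>k\<in>N. b k * of_int (wact (W \<mu>) \<mu> k)) \<le> (\<Sum>i\<in>N. of_int (\<mu> i) * z i)"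
        unfolding \<nu>_def w_def by simp
    qed
  qed
  then show ?thesis unfolding N_def n_def s_def bl_def by (simp only: add.assoc one_add_one)
qed



context
  fixes val :: "'k::field \<Rightarrow> real" and piL :: 'k and p e f :: nat
  assumes S: "padic_setting val piL p e f"
begin

lemma vmul: "x \<noteq> 0 \<Longrightarrow> y \<noteq> 0 \<Longrightarrow> val (x * y) = val x + val y"
  using S unfolding padic_setting_def by blast

lemma v1: "val 1 = 0"
  using vmul[of 1 1] by simp

lemma vinv: "x \<noteq> 0 \<Longrightarrow> val (inverse x) = - val x"
  using vmul[of x "inverse x"] v1 by simp

lemma vpow: "x \<noteq> 0 \<Longrightarrow> val (x ^ n) = real n * val x"
  by (induction n) (simp_all add: v1 vmul algebra_simps)

lemma vpowi: "x \<noteq> 0 \<Longrightarrow> val (x powi k) = of_int k * val x"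
  by (simp add: power_int_def vpow vinv)

lemma powi_nz: "x \<noteq> (0::'k) \<Longrightarrow> x powi k \<noteq> 0"
  by (simp add: power_int_def)

lemma ofnat_nz: "of_nat (p ^ f) \<noteq> (0::'k)"
proof -
  have "CHAR('k) = 0" "prime p" using S unfolding padic_setting_def by auto
  then show ?thesis by (simp add: of_nat_eq_0_iff_char_dvd prime_gt_0_nat)
qed

lemma val_q: "val (of_nat (p ^ f) :: 'k) = real (e * f)"
proof -
  have "CHAR('k) = 0" "prime p" "val (of_nat p) = real e" using S unfolding padic_setting_def by auto
  then have "(of_nat p :: 'k) \<noteq> 0" by (simp add: of_nat_eq_0_iff_char_dvd prime_gt_0_nat)
  then show ?thesis using \<open>val (of_nat p) = real e\<close> by (simp add: vpow)
qed

lemma piL_nz: "piL \<noteq> 0" and val_piL: "val piL = 1"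
  using S unfolding padic_setting_def by auto

lemma q_gt1: "real (p ^ f) > 1"
proof -
  have "prime p" "f \<ge> 1" using S unfolding padic_setting_def by auto
  then have "p \<ge> 2" by (simp add: prime_ge_2_nat)
  then have "p ^ f \<ge> p ^ 1" using \<open>f \<ge> 1\<close> by (intro power_increasing) auto
  then have "2 \<le> p ^ f" using \<open>p \<ge> 2\<close> by simp
  then have h: "real 2 \<le> real (p ^ f)" by (rule of_nat_mono)
  have "real 2 = 2" by simp
  then show ?thesis using h by linarith
qed

lemma absK_le:
  assumes "x \<noteq> 0" "y \<noteq> 0"
  shows "absK (p ^ f) val x \<le> absK (p ^ f) val y \<longleftrightarrow> val y \<le> val x"
  using assms q_gt1 by (simp add: absK_def powr_le_cancel_iff)

end

lemma lin_ext:
  fixes \<phi> :: "(nat \<Rightarrow> int) \<Rightarrow> real"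
  assumes add: "\<forall>\<mu>\<in>Lambda d. \<forall>\<nu>\<in>Lambda d. \<phi> (\<lambda>i. \<mu> i + \<nu> i) = \<phi> \<mu> + \<phi> \<nu>"
    and \<mu>: "\<mu> \<in> Lambda d"
  shows "\<phi> \<mu> = (\<Sum>i\<in>{1..d+1}. of_int (\<mu> i) * \<phi> (lam_unit i))"
proof -
  define N where "N = {1..d+1}"
  have z: "(\<lambda>i. 0::int) \<in> Lambda d" by (simp add: Lambda_def)
  have \<phi>0: "\<phi> (\<lambda>i. 0) = 0" using add[rule_format, OF z z] by simp
  have mL: "(\<lambda>j. k * lam_unit i j) \<in> Lambda d" if "i \<in> N" for i k
    using that by (auto simp: Lambda_def lam_unit_def N_def)
  have nat_mult: "\<phi> (\<lambda>j. int m * lam_unit i j) = real m * \<phi> (lam_unit i)" if i: "i \<in> N" for i m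
  proof (induction m)
    case 0
    then show ?case using \<phi>0 by simp
  next
    case (Suc m)
    have "(\<lambda>j. int (Suc m) * lam_unit i j) = (\<lambda>j. (\<lambda>j. int m * lam_unit i j) j + (\<lambda>j. 1 * lam_unit i j) j)"
      by (simp add: algebra_simps)
    then have "\<phi> (\<lambda>j. int (Suc m) * lam_unit i j) = \<phi> (\<lambda>j. int m * lam_unit i j) + \<phi> (\<lambda>j. 1 * lam_unit i j)"
      using add mL[OF i] by metis
    then show ?case using Suc by (simp add: algebra_simps)
  qed
  have int_mult: "\<phi> (\<lambda>j. k * lam_unit i j) = of_int k * \<phi> (lam_unit i)" if i: "i \<in> N" for i k
  proof (cases "k \<ge> 0")
    case True
    then show ?thesis using nat_mult[OF i, of "nat k"] by simp
  next
    case False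
    define m where "m = nat (- k)"
    have k: "k = - int m" using False by (simp add: m_def)
    have "(\<lambda>j. 0::int) = (\<lambda>j. (\<lambda>j. k * lam_unit i j) j + (\<lambda>j. int m * lam_unit i j) j)"
      by (simp add: k)
    then have "\<phi> (\<lambda>j. 0) = \<phi> (\<lambda>j. k * lam_unit i j) + \<phi> (\<lambda>j. int m * lam_unit i j)"
      using add mL[OF i] by metis
    then show ?thesis using \<phi>0 nat_mult[OF i, of m] k by simp
  qed
  have partial: "\<phi> (\<lambda>j. if j \<in> A then \<mu> j else 0) = (\<Sum>i\<in>A. of_int (\<mu> i) * \<phi> (lam_unit i))"
    if "A \<subseteq> N" for A
  proof -
    have "finite A" using that finite_subset unfolding N_def by blast
    then show ?thesis using that
    proof (induction A rule: finite_induct)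
      case empty
      then show ?case using \<phi>0 by simp
    next
      case (insert x A)
      have xN: "x \<in> N" and AN: "A \<subseteq> N" using insert by auto
      have AL: "(\<lambda>j. if j \<in> A then \<mu> j else 0) \<in> Lambda d" using AN by (auto simp: Lambda_def N_def)
      have "(\<lambda>j. if j \<in> insert x A then \<mu> j else 0)
          = (\<lambda>j. (\<lambda>j. if j \<in> A then \<mu> j else 0) j + (\<lambda>j. \<mu> x * lam_unit x j) j)"
        using insert(2) by (auto simp: lam_unit_def)
      then have "\<phi> (\<lambda>j. if j \<in> insert x A then \<mu> j else 0)
          = \<phi> (\<lambda>j. if j \<in> A then \<mu> j else 0) + \<phi> (\<lambda>j. \<mu> x * lam_unit x j)"
        using add AL mL[OF xN] by metis
      then show ?case using insert int_mult[OF xN] AN by simp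
    qed
  qed
  have "(\<lambda>j. if j \<in> N then \<mu> j else 0) = \<mu>" using \<mu> unfolding Lambda_def N_def by auto
  then show ?thesis using partial[of N] unfolding N_def by simp
qed



theorem lemma5p1:
  fixes val :: "'k::field \<Rightarrow> real" and piL :: 'k and p e f d :: nat and a :: "nat \<Rightarrow> int"
  assumes "padic_setting val piL p e f"
    and "\<forall>i\<in>{1..d}. a i \<le> a (i + 1)"
  shows "Txi val piL (p ^ f) d a =
    {\<zeta> \<in> Tprime d.
       poly_above_same_end
         (sort (map (\<lambda>i. val (zcoord piL (p ^ f) a \<zeta> i)) [1..<d + 2]))
         (map (\<lambda>i. real_of_int (a i) + real (i - 1) * real (e * f)) [1..<d + 2])}"
proof -
  note S = assms(1)
  define N where "N = {1..d+1}"
  define W where "W = (\<lambda>\<mu>::nat \<Rightarrow> int. SOME w. w permutes {1..d+1} \<and> dominant d (wact w \<mu>))"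
  have W: "W \<mu> permutes {1..d+1} \<and> dominant d (wact (W \<mu>) \<mu>)" for \<mu>
    unfolding W_def using dom_exists[of d \<mu>] by (rule someI_ex)
  define b where "b = (\<lambda>i. real_of_int (a i) + real (i - 1) * real (e * f))"
  have qnz: "(of_nat (p ^ f) :: 'k) \<noteq> 0" using ofnat_nz[OF S] .
  have pnz: "piL \<noteq> 0" using piL_nz[OF S] .
  have gval: "val (gamma_dom piL (p ^ f) d a \<mu>)
      = (\<Sum>k\<in>N. b k * of_int (wact (W \<mu>) \<mu> k)) - (\<Sum>i\<in>N. b i * of_int (\<mu> i))"
    and gnz: "gamma_dom piL (p ^ f) d a \<mu> \<noteq> 0" for \<mu>
  proof -
    define w where "w = W \<mu>"
    have wp: "w permutes {1..d+1}" using W unfolding w_def by blast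
    define D where "D = (\<Sum>(i, j)\<in>{(i, j). i \<in> {1..d+1} \<and> j \<in> {1..d+1} \<and> j < i \<and> w i < w j}. \<mu> j - \<mu> i)"
    define A where "A = (\<Sum>i\<in>{1..d+1}. a i * wact w \<mu> i) - (\<Sum>i\<in>{1..d+1}. a i * \<mu> i)"
    have g: "gamma_dom piL (p ^ f) d a \<mu> = of_nat (p ^ f) powi D * piL powi A"
      unfolding gamma_dom_def gamma_def D_def A_def w_def W_def ..
    show "gamma_dom piL (p ^ f) d a \<mu> \<noteq> 0" unfolding g using qnz pnz by (simp add: powi_nz)
    have D: "D = (\<Sum>k\<in>N. int (k - 1) * wact w \<mu> k) - (\<Sum>i\<in>N. int (i - 1) * \<mu> i)"
      unfolding D_def N_def by (rule inv_identity[OF wp])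
    have "val (gamma_dom piL (p ^ f) d a \<mu>) = of_int D * real (e * f) + of_int A"
      unfolding g using qnz pnz
      by (simp add: vmul[OF S] vpowi[OF S] powi_nz[OF S] val_q[OF S] val_piL[OF S] del: of_nat_power)
    also have "\<dots> = (\<Sum>k\<in>N. b k * of_int (wact w \<mu> k)) - (\<Sum>i\<in>N. b i * of_int (\<mu> i))"
      unfolding D A_def b_def N_def
      by (simp add: sum_subtractf sum.distrib sum_distrib_left sum_distrib_right algebra_simps of_nat_diff)
    finally show "val (gamma_dom piL (p ^ f) d a \<mu>)
      = (\<Sum>k\<in>N. b k * of_int (wact (W \<mu>) \<mu> k)) - (\<Sum>i\<in>N. b i * of_int (\<mu> i))"
      unfolding w_def .
  qed
  have main: "(\<forall>\<mu>\<in>Lambda d. absK (p ^ f) val (\<zeta> \<mu>) \<le> absK (p ^ f) val (gamma_dom piL (p ^ f) d a \<mu>))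
     \<longleftrightarrow> poly_above_same_end
         (sort (map (\<lambda>i. val (zcoord piL (p ^ f) a \<zeta> i)) [1..<d + 2]))
         (map (\<lambda>i. real_of_int (a i) + real (i - 1) * real (e * f)) [1..<d + 2])"
    if \<zeta>: "\<zeta> \<in> Tprime d" for \<zeta> :: "(nat \<Rightarrow> int) \<Rightarrow> 'k"
  proof -
    define z where "z = (\<lambda>i. val (zcoord piL (p ^ f) a \<zeta> i))"
    define v where "v = (\<lambda>i. val (\<zeta> (lam_unit i)))"
    have nz: "\<zeta> \<mu> \<noteq> 0" if "\<mu> \<in> Lambda d" for \<mu> using \<zeta> that unfolding Tprime_def by blast
    have luL: "lam_unit i \<in> Lambda d" if "i \<in> N" for i using that unfolding Lambda_def lam_unit_def N_def by auto
    have zv: "z i = v i + b i" if i: "i \<in> N" for i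
    proof -
      have "\<zeta> (lam_unit i) \<noteq> 0" using nz luL i by blast
      then have "z i = real (i - 1) * real (e * f) + of_int (a i) + v i"
        unfolding z_def zcoord_def v_def using qnz pnz
        by (simp add: vmul[OF S] vpowi[OF S] vpow[OF S] powi_nz[OF S] val_q[OF S] val_piL[OF S] del: of_nat_power)
      then show ?thesis unfolding b_def by simp
    qed
    have vz: "val (\<zeta> \<mu>) = (\<Sum>i\<in>N. of_int (\<mu> i) * v i)" if "\<mu> \<in> Lambda d" for \<mu>
    proof -
      have "\<forall>\<mu>\<in>Lambda d. \<forall>\<nu>\<in>Lambda d. val (\<zeta> (\<lambda>i. \<mu> i + \<nu> i)) = val (\<zeta> \<mu>) + val (\<zeta> \<nu>)"
        using \<zeta> nz unfolding Tprime_def by (simp add: vmul[OF S])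
      from lin_ext[of d "\<lambda>\<mu>. val (\<zeta> \<mu>)", OF this that] show ?thesis unfolding v_def N_def .
    qed
    have per: "absK (p ^ f) val (\<zeta> \<mu>) \<le> absK (p ^ f) val (gamma_dom piL (p ^ f) d a \<mu>)
       \<longleftrightarrow> (\<Sum>k\<in>{1..d+1}. b k * of_int (wact (W \<mu>) \<mu> k)) \<le> (\<Sum>i\<in>{1..d+1}. of_int (\<mu> i) * z i)"
      if \<mu>: "\<mu> \<in> Lambda d" for \<mu>
    proof -
      have "(\<Sum>i\<in>N. of_int (\<mu> i) * z i) = val (\<zeta> \<mu>) + (\<Sum>i\<in>N. b i * of_int (\<mu> i))"
        unfolding vz[OF \<mu>] by (simp add: zv sum.distrib[symmetric] algebra_simps)
      then show ?thesis
        unfolding absK_le[OF S nz[OF \<mu>] gnz] gval N_def[symmetric] by linarith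
    qed
    have "(\<forall>\<mu>\<in>Lambda d. absK (p ^ f) val (\<zeta> \<mu>) \<le> absK (p ^ f) val (gamma_dom piL (p ^ f) d a \<mu>))
      \<longleftrightarrow> (\<forall>\<mu>\<in>Lambda d. (\<Sum>k\<in>{1..d+1}. b k * of_int (wact (W \<mu>) \<mu> k)) \<le> (\<Sum>i\<in>{1..d+1}. of_int (\<mu> i) * z i))"
      using per by blast
    also have "\<dots> \<longleftrightarrow> poly_above_same_end (sort (map z [1..<d+2])) (map b [1..<d+2])"
      by (rule comb[OF W])
    finally show ?thesis unfolding z_def b_def .
  qed
  show ?thesis
    unfolding Txi_def using main by blast
qed

end
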